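(* Let the data be orthogonally separable. Then there exists $\zeta\in(0,1)$ such that for every $k\in[K]$ and every $w\in\mathbb{R}^D\setminus\{0\}$ with $0<|\mathcal I_k^w|<|\mathcal I_k|$, $$\Big\|\sum_{i\in\mathcal I_k^w}x_i\Big\|^2-\big(\mathcal A_k^w\big)^2\ge\mu_sX_{\min}^2\,\zeta.$$
   Context: Data: $x_1,\dots,x_n\in\mathbb{R}^D\setminus\{0\}$ partitioned into classes with index sets $\mathcal I_1,\dots,\mathcal I_K$; $X_{\min}=\min_i\|x_i\|$. Orthogonal separability: there exist $\mu_s\in(0,1]$ and $\mu_d>0$ such that $\langle x_i,x_j\rangle\ge\mu_s\|x_i\|\|x_j\|$ whenever $i,j$ lie in the same class and $\langle x_i,x_j\rangle\le-\mu_d\|x_i\|\|x_j\|$ whenever they lie in different classes. For $w\ne0$: $\mathcal I_k^w=\{i\in\mathcal I_k:\langle x_i,w\rangle>0\}$ and $\mathcal A_k^w=\sum_{i\in\mathcal I_k^w}\langle x_i,w/\|w\|\rangle$. *)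

theory Defs
  imports "HOL-Analysis.Analysis"
begin

definition is_class_partition :: "nat \<Rightarrow> nat \<Rightarrow> (nat \<Rightarrow> nat set) \<Rightarrow> bool" where
  "is_class_partition n K I \<longleftrightarrow>
     (\<Union>k\<in>{1..K}. I k) = {..<n} \<and>
     (\<forall>k\<in>{1..K}. \<forall>l\<in>{1..K}. k \<noteq> l \<longrightarrow> I k \<inter> I l = {})"

definition orth_separable ::
  "(nat \<Rightarrow> 'a::real_inner) \<Rightarrow> nat \<Rightarrow> (nat \<Rightarrow> nat set) \<Rightarrow> real \<Rightarrow> real \<Rightarrow> bool" where
  "orth_separable x K I mu_s mu_d \<longleftrightarrow>
     0 < mu_s \<and> mu_s \<le> 1 \<and> 0 < mu_d \<and>
     (\<forall>k\<in>{1..K}. \<forall>i\<in>I k. \<forall>j\<in>I k.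
        inner (x i) (x j) \<ge> mu_s * norm (x i) * norm (x j)) \<and>
     (\<forall>k\<in>{1..K}. \<forall>l\<in>{1..K}. k \<noteq> l \<longrightarrow> (\<forall>i\<in>I k. \<forall>j\<in>I l.
        inner (x i) (x j) \<le> - mu_d * norm (x i) * norm (x j)))"

definition active_set :: "(nat \<Rightarrow> 'a::real_inner) \<Rightarrow> (nat \<Rightarrow> nat set) \<Rightarrow> nat \<Rightarrow> 'a \<Rightarrow> nat set" where
  "active_set x I k w = {i \<in> I k. inner (x i) w > 0}"

definition active_mass :: "(nat \<Rightarrow> 'a::real_inner) \<Rightarrow> (nat \<Rightarrow> nat set) \<Rightarrow> nat \<Rightarrow> 'a \<Rightarrow> real" where
  "active_mass x I k w = (\<Sum>i\<in>active_set x I k w. inner (x i) (w /\<^sub>R norm w))"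

definition X_min :: "(nat \<Rightarrow> 'a::real_normed_vector) \<Rightarrow> nat \<Rightarrow> real" where
  "X_min x n = Min ((\<lambda>i. norm (x i)) ` {..<n})"

end

theory Submission
  imports Defs
begin

theorem mainTheorem11:
  fixes x :: "nat \<Rightarrow> 'a::euclidean_space"
    and n K :: nat and I :: "nat \<Rightarrow> nat set" and mu_s mu_d :: real
  assumes nonzero: "\<forall>i<n. x i \<noteq> 0"
    and partition: "is_class_partition n K I"
    and sep: "orth_separable x K I mu_s mu_d"
  shows "\<exists>\<zeta>::real. 0 < \<zeta> \<and> \<zeta> < 1 \<and>
    (\<forall>k\<in>{1..K}. \<forall>w::'a. w \<noteq> 0 \<longrightarrow>
       0 < card (active_set x I k w) \<longrightarrow> card (active_set x I k w) < card (I k) \<longrightarrow>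
       (norm (\<Sum>i\<in>active_set x I k w. x i))\<^sup>2 - (active_mass x I k w)\<^sup>2
         \<ge> mu_s * (X_min x n)\<^sup>2 * \<zeta>)"
proof (intro exI[of _ "mu_s / 2"] conjI ballI allI impI)
  have ms: "0 < mu_s" "mu_s \<le> 1" using sep unfolding orth_separable_def by auto
  show "0 < mu_s / 2" "mu_s / 2 < 1" using ms by auto
  fix k w
  assume k: "k \<in> {1..K}" and w: "w \<noteq> (0::'a)"
    and c1: "0 < card (active_set x I k w)" and c2: "card (active_set x I k w) < card (I k)"
  define S where "S = active_set x I k w"
  define v where "v = (\<Sum>i\<in>S. x i)"
  define u where "u = w /\<^sub>R norm w"
  define X where "X = X_min x n"
  have Ik: "I k \<subseteq> {..<n}" using partition k unfolding is_class_partition_def by auto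
  have finI: "finite (I k)" using Ik finite_subset by blast
  have SI: "S \<subseteq> I k" unfolding S_def active_set_def by auto
  have finS: "finite S" using SI finI finite_subset by blast
  have Sne: "S \<noteq> {}" using c1 S_def by auto
  then obtain i0 where i0: "i0 \<in> S" by auto
  have "S \<noteq> I k" using c2 S_def by auto
  then obtain j where j: "j \<in> I k" "j \<notin> S" using SI by auto
  have jw: "inner (x j) w \<le> 0" using j unfolding S_def active_set_def by auto
  have nu: "norm u = 1" using w u_def by simp
  have uj: "inner (x j) u \<le> 0" using jw w unfolding u_def
    by (simp add: mult_nonneg_nonpos)
  have xj0: "norm (x j) > 0" using nonzero j Ik by auto
  have npos: "n > 0" using Ik i0 SI by auto
  have Xle: "\<And>i. i < n \<Longrightarrow> X \<le> norm (x i)" unfolding X_def X_min_def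
    by (rule Min_le) auto
  have X0: "0 \<le> X" unfolding X_def X_min_def using npos
    by (subst Min_ge_iff) auto
  have Am: "active_mass x I k w = inner v u"
    unfolding active_mass_def v_def u_def S_def by (simp add: inner_sum_left sum_distrib_left)
  define A where "A = inner v u"
  define r where "r = v - A *\<^sub>R u"
  have ru: "inner r u = 0" unfolding r_def A_def using nu
    by (simp add: inner_diff_left power2_norm_eq_inner[symmetric])
  have nr: "(norm r)\<^sup>2 = (norm v)\<^sup>2 - A\<^sup>2"
  proof -
    have "(norm v)\<^sup>2 = (norm (r + A *\<^sub>R u))\<^sup>2" unfolding r_def by simp
    also have "\<dots> = (norm r)\<^sup>2 + A\<^sup>2"
      using ru nu by (subst norm_add_Pythagorean) (auto simp: orthogonal_def power_mult_distrib)
    finally show ?thesis by simp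
  qed
  have sepk: "\<forall>i\<in>I k. \<forall>j\<in>I k. inner (x i) (x j) \<ge> mu_s * norm (x i) * norm (x j)"
    using sep k unfolding orth_separable_def by auto
  have "inner (x j) v = (\<Sum>i\<in>S. inner (x j) (x i))" unfolding v_def by (simp add: inner_sum_right)
  also have "\<dots> \<ge> (\<Sum>i\<in>S. mu_s * norm (x j) * norm (x i))"
    using sepk j SI by (intro sum_mono) auto
  finally have h1: "inner (x j) v \<ge> mu_s * norm (x j) * (\<Sum>i\<in>S. norm (x i))"
    by (simp add: sum_distrib_left)
  have "inner (x j) v = A * inner (x j) u + inner (x j) r" unfolding r_def
    by (simp add: inner_diff_right)
  also have "\<dots> \<le> inner (x j) r"
  proof -
    have s0: "(\<Sum>i\<in>S. inner (x i) w) \<ge> 0"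
      unfolding S_def active_set_def by (rule sum_nonneg) auto
    have "A = inverse (norm w) * (\<Sum>i\<in>S. inner (x i) w)"
      unfolding A_def v_def u_def by (simp add: inner_sum_left sum_distrib_left)
    then have "A \<ge> 0" using s0 by simp
    then show ?thesis using uj by (simp add: mult_nonneg_nonpos)
  qed
  also have "\<dots> \<le> norm (x j) * norm r" by (rule Cauchy_Schwarz_ineq2[THEN order_trans[OF abs_ge_self]]) 
  finally have "mu_s * norm (x j) * (\<Sum>i\<in>S. norm (x i)) \<le> norm (x j) * norm r" using h1 by linarith
  hence h2: "mu_s * (\<Sum>i\<in>S. norm (x i)) \<le> norm r" using xj0 by (simp add: mult.assoc mult.left_commute)
  have "norm (x i0) \<le> (\<Sum>i\<in>S. norm (x i))"
    using finS i0 by (intro member_le_sum) auto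
  moreover have "X \<le> norm (x i0)" using Xle i0 SI Ik by auto
  ultimately have "mu_s * X \<le> norm r" using h2 ms
    by (meson mult_left_mono order_trans less_imp_le)
  moreover have "0 \<le> mu_s * X" using ms X0 by simp
  ultimately have "(mu_s * X)\<^sup>2 \<le> (norm r)\<^sup>2" by (rule power_mono)
  moreover have "mu_s * X\<^sup>2 * (mu_s / 2) \<le> (mu_s * X)\<^sup>2"
  proof -
    have "mu_s * X\<^sup>2 * (mu_s / 2) = (mu_s * X)\<^sup>2 / 2" by (simp add: power2_eq_square)
    moreover have "0 \<le> (mu_s * X)\<^sup>2" by simp
    ultimately show ?thesis by linarith
  qed
  ultimately show "(norm (\<Sum>i\<in>active_set x I k w. x i))\<^sup>2 - (active_mass x I k w)\<^sup>2
         \<ge> mu_s * (X_min x n)\<^sup>2 * (mu_s / 2)"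
    using nr unfolding Am A_def X_def v_def S_def by linarith
qed

end
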